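(* Let $E$ be a real Banach space, $K\subset E$ nonempty closed convex, $g\in\mathcal F$ totally convex on $E$ satisfying H1–H2, $Y$ a real Banach space containing a closed, convex, pointed cone $C$ with nonempty interior, and $f:E\times E\to Y$. If $T:K\to\mathcal P(K)$ (with nonempty closed convex values) is quasi $D_g$-nonexpansive, and $f(x,\cdot)$ is $C$-convex and positively lower semicontinuous for all $x\in E$, then $DS(f,T)$ is closed and convex.
   Context: $\mathcal F$: functions $g:E\to\mathbb R$ strictly convex, lower semicontinuous, Gâteaux differentiable (derivative $g'$). $D_g(x,y)=g(x)-g(y)-\langle x-y,g'(y)\rangle$; $v_g(x,t)=\inf\{D_g(y,x):\|y-x\|=t\}$; totally convex: $v_g(x,t)>0$ for all $x$, $t>0$. H1: level sets of $D_g(x,\cdot)$ bounded for all $x$; H2: $\inf_{x\in A}v_g(x,t)>0$ for all $t>0$ and bounded $A$. $\Pi^g_D(x)$ = unique minimizer of $D_g(\cdot,x)$ over nonempty closed convex $D$. $\mathrm{Fix}(T)=\{x\in K:x\in T(x)\}$; $T$ is quasi $D_g$-nonexpansive if $S(x):=\Pi^g_{T(x)}(x)$ has $\mathrm{Fix}(S)\ne\emptyset$ and $D_g(p,S(x))\le D_g(p,x)$ for $p\in\mathrm{Fix}(S)$, $x\in K$. $C^+=\{z\in Y^*:\langle y,z\rangle\ge0\ \forall y\in C\}$; $y\preceq y'$ iff $y'-y\in C$; $C$-convex: $G(tx+(1-t)y)\preceq tG(x)+(1-t)G(y)$; positively lower semicontinuous: $x\mapsto\langle G(x),z\rangle$ lower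 semicontinuous for every $z\in C^+$. $DS(f,T)=\{x\in K:x\in T(x),\ f(y,x)\in-C\ \forall y\in K\}$. *)

theory Defs
  imports "HOL-Analysis.Analysis"
begin

definition lsc :: "('a::topological_space \<Rightarrow> real) \<Rightarrow> bool" where
  "lsc h \<longleftrightarrow> (\<forall>x. \<forall>a. a < h x \<longrightarrow> (\<forall>\<^sub>F y in at x. a < h y))"

definition strictly_convex :: "('a::real_vector \<Rightarrow> real) \<Rightarrow> bool" where
  "strictly_convex g \<longleftrightarrow>
     (\<forall>x y t. x \<noteq> y \<and> 0 < t \<and> t < 1 \<longrightarrow>
        g (t *\<^sub>R x + (1 - t) *\<^sub>R y) < t * g x + (1 - t) * g y)"

definition gateaux_deriv :: "('a::real_normed_vector \<Rightarrow> real) \<Rightarrow> ('a \<Rightarrow> ('a \<Rightarrow>\<^sub>L real)) \<Rightarrow> bool" where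
  "gateaux_deriv g g' \<longleftrightarrow>
     (\<forall>y v. ((\<lambda>t. (g (y + t *\<^sub>R v) - g y) / t) \<longlongrightarrow> blinfun_apply (g' y) v) (at 0))"

definition class_F :: "('a::real_normed_vector \<Rightarrow> real) \<Rightarrow> ('a \<Rightarrow> ('a \<Rightarrow>\<^sub>L real)) \<Rightarrow> bool" where
  "class_F g g' \<longleftrightarrow> strictly_convex g \<and> lsc g \<and> gateaux_deriv g g'"

definition bregman :: "('a::real_normed_vector \<Rightarrow> real) \<Rightarrow> ('a \<Rightarrow> ('a \<Rightarrow>\<^sub>L real)) \<Rightarrow> 'a \<Rightarrow> 'a \<Rightarrow> real" where
  "bregman g g' x y = g x - g y - blinfun_apply (g' y) (x - y)"

definition modulus_tc :: "('a::real_normed_vector \<Rightarrow> real) \<Rightarrow> ('a \<Rightarrow> ('a \<Rightarrow>\<^sub>L real)) \<Rightarrow> 'a \<Rightarrow> real \<Rightarrow> real" where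
  "modulus_tc g g' x t = Inf {bregman g g' y x | y. norm (y - x) = t}"

definition totally_convex :: "('a::real_normed_vector \<Rightarrow> real) \<Rightarrow> ('a \<Rightarrow> ('a \<Rightarrow>\<^sub>L real)) \<Rightarrow> bool" where
  "totally_convex g g' \<longleftrightarrow> (\<forall>x t. 0 < t \<longrightarrow> 0 < modulus_tc g g' x t)"

definition H1 :: "('a::real_normed_vector \<Rightarrow> real) \<Rightarrow> ('a \<Rightarrow> ('a \<Rightarrow>\<^sub>L real)) \<Rightarrow> bool" where
  "H1 g g' \<longleftrightarrow> (\<forall>x r. bounded {y. bregman g g' x y \<le> r})"

definition H2 :: "('a::real_normed_vector \<Rightarrow> real) \<Rightarrow> ('a \<Rightarrow> ('a \<Rightarrow>\<^sub>L real)) \<Rightarrow> bool" where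
  "H2 g g' \<longleftrightarrow> (\<forall>t A. 0 < t \<and> bounded A \<and> A \<noteq> {} \<longrightarrow> 0 < Inf ((\<lambda>x. modulus_tc g g' x t) ` A))"

definition bproj :: "('a::real_normed_vector \<Rightarrow> real) \<Rightarrow> ('a \<Rightarrow> ('a \<Rightarrow>\<^sub>L real)) \<Rightarrow> 'a set \<Rightarrow> 'a \<Rightarrow> 'a" where
  "bproj g g' D x = (THE y. y \<in> D \<and> (\<forall>z\<in>D. bregman g g' y x \<le> bregman g g' z x))"

definition quasi_Dg_nonexpansive :: "('a::real_normed_vector \<Rightarrow> real) \<Rightarrow> ('a \<Rightarrow> ('a \<Rightarrow>\<^sub>L real)) \<Rightarrow> 'a set \<Rightarrow> ('a \<Rightarrow> 'a set) \<Rightarrow> bool" where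
  "quasi_Dg_nonexpansive g g' K T \<longleftrightarrow>
     (let S = (\<lambda>x. bproj g g' (T x) x); FixS = {x \<in> K. x = S x} in
       FixS \<noteq> {} \<and> (\<forall>p\<in>FixS. \<forall>x\<in>K. bregman g g' p (S x) \<le> bregman g g' p x))"

definition dual_cone :: "'b::real_normed_vector set \<Rightarrow> ('b \<Rightarrow>\<^sub>L real) set" where
  "dual_cone C = {z. \<forall>y\<in>C. 0 \<le> blinfun_apply z y}"

(* C-convexity: G(tx+(1-t)y) \<preceq> tG(x)+(1-t)G(y), where a \<preceq> b iff b - a \<in> C *)
definition C_convex :: "'b::real_vector set \<Rightarrow> ('a::real_vector \<Rightarrow> 'b) \<Rightarrow> bool" where
  "C_convex C G \<longleftrightarrow> (\<forall>x y t. 0 \<le> t \<and> t \<le> 1 \<longrightarrow>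
      (t *\<^sub>R G x + (1 - t) *\<^sub>R G y) - G (t *\<^sub>R x + (1 - t) *\<^sub>R y) \<in> C)"

definition positively_lsc :: "'b::real_normed_vector set \<Rightarrow> ('a::topological_space \<Rightarrow> 'b) \<Rightarrow> bool" where
  "positively_lsc C G \<longleftrightarrow> (\<forall>z\<in>dual_cone C. lsc (\<lambda>x. blinfun_apply z (G x)))"

definition pointed :: "'b::real_vector set \<Rightarrow> bool" where
  "pointed C \<longleftrightarrow> C \<inter> uminus ` C \<subseteq> {0}"

definition DS :: "'b::real_vector set \<Rightarrow> 'a set \<Rightarrow> ('a \<Rightarrow> 'a \<Rightarrow> 'b) \<Rightarrow> ('a \<Rightarrow> 'a set) \<Rightarrow> 'a set" where
  "DS C K f T = {x \<in> K. x \<in> T x \<and> (\<forall>y\<in>K. f y x \<in> uminus ` C)}"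

end

theory Submission
  imports Defs
begin


definition lin_graph :: "('b::real_vector \<Rightarrow> real) \<Rightarrow> ('b \<times> real) set \<Rightarrow> bool" where
  "lin_graph p G \<longleftrightarrow> G \<noteq> {} \<and>
     (\<forall>x a y b s t. (x,a)\<in>G \<longrightarrow> (y,b)\<in>G \<longrightarrow> (s *\<^sub>R x + t *\<^sub>R y, s*a + t*b) \<in> G) \<and>
     (\<forall>x a b. (x,a)\<in>G \<longrightarrow> (x,b)\<in>G \<longrightarrow> a = b) \<and>
     (\<forall>x a. (x,a)\<in>G \<longrightarrow> a \<le> p x)"

definition sublin :: "('b::real_vector \<Rightarrow> real) \<Rightarrow> bool" where
  "sublin p \<longleftrightarrow> (\<forall>x y. p (x + y) \<le> p x + p y) \<and> (\<forall>r x. 0 \<le> r \<longrightarrow> p (r *\<^sub>R x) = r * p x)"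

lemma lin_graph_closed:
  "lin_graph p G \<Longrightarrow> (x,a)\<in>G \<Longrightarrow> (y,b)\<in>G \<Longrightarrow> (s *\<^sub>R x + t *\<^sub>R y, s*a + t*b) \<in> G"
  unfolding lin_graph_def by blast

lemma lin_graph_fun: "lin_graph p G \<Longrightarrow> (x,a)\<in>G \<Longrightarrow> (x,b)\<in>G \<Longrightarrow> a = b"
  unfolding lin_graph_def by blast

lemma lin_graph_le: "lin_graph p G \<Longrightarrow> (x,a)\<in>G \<Longrightarrow> a \<le> p x"
  unfolding lin_graph_def by blast

lemma lin_graph_scale: "lin_graph p G \<Longrightarrow> (x,a)\<in>G \<Longrightarrow> (s *\<^sub>R x, s*a) \<in> G"
  using lin_graph_closed[of p G x a x a s 0] by simp

lemma lin_graph_add: "lin_graph p G \<Longrightarrow> (x,a)\<in>G \<Longrightarrow> (y,b)\<in>G \<Longrightarrow> (x + y, a + b) \<in> G"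
  using lin_graph_closed[of p G x a y b 1 1] by simp

lemma lin_graph_zero: "lin_graph p G \<Longrightarrow> (0,0) \<in> G"
proof -
  assume G: "lin_graph p G"
  then obtain x a where "(x,a) \<in> G" unfolding lin_graph_def by auto
  from lin_graph_scale[OF G this, of 0] show ?thesis by simp
qed

lemma lin_graph_total:
  fixes p :: "'b::real_vector \<Rightarrow> real"
  assumes sp: "sublin p" and M: "lin_graph p M"
    and maxi: "\<And>G. lin_graph p G \<Longrightarrow> M \<subseteq> G \<Longrightarrow> G = M"
  shows "\<exists>a. (x1,a) \<in> M"
proof (rule ccontr)
  assume nx: "\<not> (\<exists>a. (x1,a) \<in> M)"
  have padd: "p (x + y) \<le> p x + p y" for x y using sp unfolding sublin_def by blast
  have phom: "0 \<le> r \<Longrightarrow> p (r *\<^sub>R x) = r * p x" for r x using sp unfolding sublin_def by blast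
  define c where "c = Sup {b - p (u - x1) | u b. (u,b) \<in> M}"
  have key: "b' - p (u - x1) \<le> p (v + x1) - b" if "(u,b')\<in>M" "(v,b)\<in>M" for u b' v b
  proof -
    have "(u+v, b'+b) \<in> M" using lin_graph_add[OF M that] .
    then have "b' + b \<le> p (u+v)" using lin_graph_le[OF M] by blast
    also have "p (u+v) \<le> p (u - x1) + p (v + x1)" using padd[of "u - x1" "v + x1"] by simp
    finally show ?thesis by simp
  qed
  have ne: "{b - p (u - x1) | u b. (u,b) \<in> M} \<noteq> {}" using lin_graph_zero[OF M] by blast
  have bdd: "bdd_above {b - p (u - x1) | u b. (u,b) \<in> M}"
    unfolding bdd_above_def using key[OF _ lin_graph_zero[OF M]] by auto
  have c_up: "b - p (u - x1) \<le> c" if "(u,b)\<in>M" for u b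
    unfolding c_def using that bdd by (intro cSup_upper) auto
  have c_lo: "c \<le> p (v + x1) - b" if "(v,b)\<in>M" for v b
    unfolding c_def using ne key[OF _ that] by (intro cSup_least) auto
  define M' where "M' = {(x + t *\<^sub>R x1, a + t * c) | x a t. (x,a)\<in>M}"
  have sub: "M \<subseteq> M'"
  proof
    fix z assume "z \<in> M"
    then obtain x a where "z = (x,a)" "(x,a) \<in> M" by (cases z) auto
    moreover have "(x,a) = (x + 0 *\<^sub>R x1, a + 0 * c)" by simp
    ultimately show "z \<in> M'" unfolding M'_def by blast
  qed
  have inM': "(x1, c) \<in> M'"
  proof -
    have "(x1, c) = (0 + 1 *\<^sub>R x1, 0 + 1 * c)" by simp
    then show ?thesis unfolding M'_def using lin_graph_zero[OF M] by blast
  qed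
  have lg: "lin_graph p M'"
    unfolding lin_graph_def
  proof (intro conjI allI impI)
    show "M' \<noteq> {}" using inM' by blast
  next
    fix x a y b s t assume "(x,a) \<in> M'" "(y,b) \<in> M'"
    then obtain x' a' t1 y' b' t2 where h: "x = x' + t1 *\<^sub>R x1" "a = a' + t1 * c" "(x',a')\<in>M"
      "y = y' + t2 *\<^sub>R x1" "b = b' + t2 * c" "(y',b')\<in>M"
      unfolding M'_def by blast
    have "(s *\<^sub>R x' + t *\<^sub>R y', s*a' + t*b') \<in> M" using lin_graph_closed[OF M h(3) h(6)] .
    moreover have "s *\<^sub>R x + t *\<^sub>R y = (s *\<^sub>R x' + t *\<^sub>R y') + (s*t1 + t*t2) *\<^sub>R x1"
      using h by (simp add: algebra_simps)
    moreover have "s*a + t*b = (s*a' + t*b') + (s*t1 + t*t2) * c"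
      using h by (simp add: algebra_simps)
    ultimately show "(s *\<^sub>R x + t *\<^sub>R y, s*a + t*b) \<in> M'" unfolding M'_def by blast
  next
    fix x a b assume "(x,a) \<in> M'" "(x,b) \<in> M'"
    then obtain x' a' t1 y' b' t2 where h: "x = x' + t1 *\<^sub>R x1" "a = a' + t1 * c" "(x',a')\<in>M"
      "x = y' + t2 *\<^sub>R x1" "b = b' + t2 * c" "(y',b')\<in>M"
      unfolding M'_def by blast
    show "a = b"
    proof (cases "t1 = t2")
      case True
      then have "x' = y'" using h by simp
      then show ?thesis using h True lin_graph_fun[OF M] by blast
    next
      case False
      define d where "d = t2 - t1"
      have d: "d \<noteq> 0" using False d_def by simp
      have "x' - y' = d *\<^sub>R x1" using h unfolding d_def by (simp add: algebra_simps)
      then have "(1/d) *\<^sub>R (x' - y') = x1" using d by simp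
      then have x1eq: "x1 = (1/d) *\<^sub>R x' + (-1/d) *\<^sub>R y'"
        by (simp add: scaleR_right_diff_distrib)
      have "((1/d) *\<^sub>R x' + (-1/d) *\<^sub>R y', (1/d) * a' + (-1/d) * b') \<in> M"
        by (rule lin_graph_closed[OF M h(3) h(6)])
      then have "(x1, (1/d) * a' + (-1/d) * b') \<in> M"
        by (subst x1eq)
      then show ?thesis using nx by blast
    qed
  next
    fix x a assume "(x,a) \<in> M'"
    then obtain x' a' t where h: "x = x' + t *\<^sub>R x1" "a = a' + t * c" "(x',a')\<in>M"
      unfolding M'_def by blast
    consider "t = 0" | "t > 0" | "t < 0" by linarith
    then show "a \<le> p x"
    proof cases
      case 1 then show ?thesis using h lin_graph_le[OF M] by simp
    next
      case 2
      have m: "((1/t) *\<^sub>R x', (1/t) * a') \<in> M" using lin_graph_scale[OF M h(3)] .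
      have cle: "c \<le> p ((1/t) *\<^sub>R x' + x1) - (1/t) * a'" using c_lo[OF m] .
      moreover have "x = t *\<^sub>R ((1/t) *\<^sub>R x' + x1)" using h 2 by (simp add: scaleR_add_right)
      ultimately have "p x = t * p ((1/t) *\<^sub>R x' + x1)" "t * c \<le> t * (p ((1/t) *\<^sub>R x' + x1) - (1/t) * a')"
        using phom[of t] 2 by (metis less_le) (use mult_left_mono[OF cle] 2 in auto)
      moreover have "t * (p ((1/t) *\<^sub>R x' + x1) - (1/t) * a') = t * p ((1/t) *\<^sub>R x' + x1) - a'"
        using 2 by (simp add: right_diff_distrib)
      ultimately show ?thesis using h by linarith
    next
      case 3
      define r where "r = -t"
      have r: "r > 0" using 3 r_def by simp
      have m: "((1/r) *\<^sub>R x', (1/r) * a') \<in> M" using lin_graph_scale[OF M h(3)] .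
      have cle: "(1/r) * a' - p ((1/r) *\<^sub>R x' - x1) \<le> c" using c_up[OF m] .
      moreover have "x = r *\<^sub>R ((1/r) *\<^sub>R x' - x1)" using h r r_def by (simp add: scaleR_diff_right)
      ultimately have "p x = r * p ((1/r) *\<^sub>R x' - x1)" "r * ((1/r) * a' - p ((1/r) *\<^sub>R x' - x1)) \<le> r * c"
        using phom[of r] r by (metis less_le) (use mult_left_mono[OF cle] r in auto)
      moreover have "r * ((1/r) * a' - p ((1/r) *\<^sub>R x' - x1)) = a' - r * p ((1/r) *\<^sub>R x' - x1)"
        using r by (simp add: right_diff_distrib)
      moreover have "t * c = - (r * c)" by (simp add: r_def)
      ultimately show ?thesis using h by linarith
    qed
  qed
  have "M' = M" using maxi[OF lg sub] .
  then show False using inM' nx by blast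
qed

lemma chain_union_lin_graph:
  assumes CC: "CC \<in> chains {G. lin_graph p G \<and> G0 \<subseteq> G}" and ne: "CC \<noteq> {}"
  shows "lin_graph p (\<Union>CC) \<and> G0 \<subseteq> \<Union>CC"
proof -
  have mem: "G \<in> CC \<Longrightarrow> lin_graph p G \<and> G0 \<subseteq> G" for G using CC unfolding chains_def by blast
  have ch: "G1 \<in> CC \<Longrightarrow> G2 \<in> CC \<Longrightarrow> G1 \<subseteq> G2 \<or> G2 \<subseteq> G1" for G1 G2 using chainsD[OF CC] by blast
  obtain G where G: "G \<in> CC" using ne by blast
  have "lin_graph p (\<Union>CC)"
    unfolding lin_graph_def
  proof (intro conjI allI impI)
    show "\<Union>CC \<noteq> {}" using G mem unfolding lin_graph_def by blast
  next
    fix x a y b s t assume "(x,a) \<in> \<Union>CC" "(y,b) \<in> \<Union>CC"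
    then obtain G1 G2 where g: "G1 \<in> CC" "G2 \<in> CC" "(x,a)\<in>G1" "(y,b)\<in>G2" by blast
    from ch[OF g(1,2)] show "(s *\<^sub>R x + t *\<^sub>R y, s*a + t*b) \<in> \<Union>CC"
    proof
      assume "G1 \<subseteq> G2" then show ?thesis using lin_graph_closed[of p G2 x a y b s t] mem[OF g(2)] g by blast
    next
      assume "G2 \<subseteq> G1" then show ?thesis using lin_graph_closed[of p G1 x a y b s t] mem[OF g(1)] g by blast
    qed
  next
    fix x a b assume "(x,a) \<in> \<Union>CC" "(x,b) \<in> \<Union>CC"
    then obtain G1 G2 where g: "G1 \<in> CC" "G2 \<in> CC" "(x,a)\<in>G1" "(x,b)\<in>G2" by blast
    from ch[OF g(1,2)] show "a = b"
    proof
      assume "G1 \<subseteq> G2" then show ?thesis using lin_graph_fun[of p G2 x a b] mem[OF g(2)] g by blast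
    next
      assume "G2 \<subseteq> G1" then show ?thesis using lin_graph_fun[of p G1 x a b] mem[OF g(1)] g by blast
    qed
  next
    fix x a assume "(x,a) \<in> \<Union>CC"
    then show "a \<le> p x" using mem lin_graph_le by blast
  qed
  moreover have "G0 \<subseteq> \<Union>CC" using G mem by blast
  ultimately show ?thesis by blast
qed

theorem hahn_banach_graph:
  fixes p :: "'b::real_vector \<Rightarrow> real"
  assumes sp: "sublin p" and G0: "lin_graph p G0"
  shows "\<exists>H. (\<forall>x y. H (x + y) = H x + H y) \<and> (\<forall>r x. H (r *\<^sub>R x) = r * H x)
            \<and> (\<forall>x. H x \<le> p x) \<and> (\<forall>x a. (x,a)\<in>G0 \<longrightarrow> H x = a)"
proof -
  define A where "A = {G. lin_graph p G \<and> G0 \<subseteq> G}"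
  have "\<forall>CC\<in>chains A. \<exists>U\<in>A. \<forall>X\<in>CC. X \<subseteq> U"
  proof
    fix CC assume CC: "CC \<in> chains A"
    show "\<exists>U\<in>A. \<forall>X\<in>CC. X \<subseteq> U"
    proof (cases "CC = {}")
      case True then show ?thesis using G0 unfolding A_def by blast
    next
      case False then show ?thesis using chain_union_lin_graph[OF CC[unfolded A_def] False]
        unfolding A_def by blast
    qed
  qed
  from Zorn_Lemma2[OF this] obtain M where M: "M \<in> A" and maxM: "\<forall>X\<in>A. M \<subseteq> X \<longrightarrow> X = M" by blast
  have LM: "lin_graph p M" and G0M: "G0 \<subseteq> M" using M unfolding A_def by auto
  have tot: "\<exists>a. (x,a) \<in> M" for x
    by (rule lin_graph_total[OF sp LM]) (use maxM G0M in \<open>auto simp: A_def\<close>)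
  define H where "H x = (THE a. (x,a) \<in> M)" for x
  have HM: "(x, H x) \<in> M" for x
  proof -
    obtain a where a: "(x,a) \<in> M" using tot by blast
    have "\<exists>!a. (x,a) \<in> M" using a lin_graph_fun[OF LM] by blast
    then show ?thesis unfolding H_def by (rule theI')
  qed
  have Heq: "(x,a) \<in> M \<Longrightarrow> H x = a" for x a using HM lin_graph_fun[OF LM] by blast
  show ?thesis
  proof (intro exI conjI allI impI)
    fix x y show "H (x + y) = H x + H y" using lin_graph_add[OF LM HM HM] Heq by blast
  next
    fix r x show "H (r *\<^sub>R x) = r * H x" using lin_graph_scale[OF LM HM] Heq by blast
  next
    fix x show "H x \<le> p x" using lin_graph_le[OF LM HM] .
  next
    fix x a assume "(x,a) \<in> G0" then show "H x = a" using G0M Heq by blast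
  qed
qed

lemma infdist_lb:
  "A \<noteq> {} \<Longrightarrow> (\<And>a. a \<in> A \<Longrightarrow> m \<le> dist x a) \<Longrightarrow> m \<le> infdist x A"
  by (simp add: infdist_notempty cINF_greatest)

lemma cone_add_mem:
  assumes "convex C" "cone C" "x \<in> C" "y \<in> C" shows "x + y \<in> C"
proof -
  have "(1/2) *\<^sub>R x + (1/2) *\<^sub>R y \<in> C" using assms(1,3,4) unfolding convex_def by auto
  then have "2 *\<^sub>R ((1/2) *\<^sub>R x + (1/2) *\<^sub>R y) \<in> C" using assms(2) unfolding cone_def by auto
  then show ?thesis by (simp add: scaleR_add_right)
qed

lemma cone_scale_mem:
  assumes "cone C" "x \<in> C" "0 \<le> r" shows "r *\<^sub>R x \<in> C"
proof (cases "r = 0")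
  case True then show ?thesis using assms cone_contains_0[OF assms(1)] by auto
next
  case False then show ?thesis using assms unfolding cone_def by auto
qed

lemma infdist_cone_sublin:
  fixes C :: "'b::real_normed_vector set"
  assumes "convex C" "cone C" "C \<noteq> {}"
  shows "sublin (\<lambda>x. infdist x C)"
  unfolding sublin_def
proof (intro conjI allI impI)
  fix x y :: 'b
  have "infdist (x + y) C - infdist x C \<le> dist y b" if b: "b \<in> C" for b
  proof -
    have "infdist (x + y) C - dist y b \<le> dist x a" if a: "a \<in> C" for a
    proof -
      have "infdist (x + y) C \<le> dist (x + y) (a + b)"
        using infdist_le cone_add_mem[OF assms(1,2) a b] by blast
      also have "\<dots> \<le> dist x a + dist y b"
        unfolding dist_norm using norm_triangle_ineq[of "x - a" "y - b"] by (simp add: algebra_simps)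
      finally show ?thesis by simp
    qed
    then have "infdist (x + y) C - dist y b \<le> infdist x C" using infdist_lb[OF assms(3)] by blast
    then show ?thesis by simp
  qed
  then have "infdist (x + y) C - infdist x C \<le> infdist y C" using infdist_lb[OF assms(3)] by blast
  then show "infdist (x + y) C \<le> infdist x C + infdist y C" by simp
next
  fix r :: real and x :: 'b assume r: "0 \<le> r"
  have z: "0 \<in> C" using cone_contains_0[OF assms(2)] assms(3) by blast
  show "infdist (r *\<^sub>R x) C = r * infdist x C"
  proof (cases "r = 0")
    case True then show ?thesis using z by simp
  next
    case False
    then have rp: "r > 0" using r by simp
    have "infdist (r *\<^sub>R x) C / r \<le> dist x a" if a: "a \<in> C" for a
    proof -
      have "infdist (r *\<^sub>R x) C \<le> dist (r *\<^sub>R x) (r *\<^sub>R a)"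
        using infdist_le cone_scale_mem[OF assms(2) a r] by blast
      also have "\<dots> = r * dist x a" unfolding dist_norm using rp
        by (simp flip: scaleR_diff_right)
      finally show ?thesis using rp by (simp add: pos_divide_le_eq mult.commute)
    qed
    then have "infdist (r *\<^sub>R x) C / r \<le> infdist x C" using infdist_lb[OF assms(3)] by blast
    then have le1: "infdist (r *\<^sub>R x) C \<le> r * infdist x C" using rp by (simp add: pos_divide_le_eq mult.commute)
    have "r * infdist x C \<le> dist (r *\<^sub>R x) b" if b: "b \<in> C" for b
    proof -
      have "infdist x C \<le> dist x ((1/r) *\<^sub>R b)"
        using infdist_le cone_scale_mem[OF assms(2) b, of "1/r"] rp by simp
      also have "\<dots> = (1/r) * dist (r *\<^sub>R x) b"
      proof -
        have "x - (1/r) *\<^sub>R b = (1/r) *\<^sub>R (r *\<^sub>R x - b)" using rp by (simp add: scaleR_diff_right)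
        then show ?thesis unfolding dist_norm using rp by simp
      qed
      finally have "infdist x C \<le> dist (r *\<^sub>R x) b / r" by simp
      then show ?thesis using rp by (simp add: le_divide_eq mult.commute)
    qed
    then have "r * infdist x C \<le> infdist (r *\<^sub>R x) C" using infdist_lb[OF assms(3)] by blast
    with le1 show ?thesis by simp
  qed
qed

lemma dual_cone_sep:
  fixes C :: "'b::real_normed_vector set"
  assumes cl: "closed C" and cv: "convex C" and cn: "cone C" and ne: "C \<noteq> {}" and u: "u \<notin> C"
  shows "\<exists>z\<in>dual_cone C. blinfun_apply z u < 0"
proof -
  define p where "p x = infdist x C" for x
  have sp: "sublin p" unfolding p_def using infdist_cone_sublin[OF cv cn ne] .
  have phom: "0 \<le> r \<Longrightarrow> p (r *\<^sub>R x) = r * p x" for r x using sp unfolding sublin_def by blast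
  have z0: "0 \<in> C" using cone_contains_0[OF cn] ne by blast
  have u0: "u \<noteq> 0" using u z0 by blast
  have pnn: "0 \<le> p x" for x unfolding p_def by (rule infdist_nonneg)
  have pu: "p u > 0" unfolding p_def using infdist_pos_not_in_closed[OF cl ne u] .
  define G0 where "G0 = {(t *\<^sub>R u, t * p u) | t. True}"
  have lg: "lin_graph p G0"
    unfolding lin_graph_def
  proof (intro conjI allI impI)
    show "G0 \<noteq> {}" unfolding G0_def by blast
  next
    fix x a y b s t assume "(x,a) \<in> G0" "(y,b) \<in> G0"
    then obtain t1 t2 where h: "x = t1 *\<^sub>R u" "a = t1 * p u" "y = t2 *\<^sub>R u" "b = t2 * p u"
      unfolding G0_def by blast
    have "(s *\<^sub>R x + t *\<^sub>R y, s*a + t*b) = ((s*t1 + t*t2) *\<^sub>R u, (s*t1 + t*t2) * p u)"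
      using h by (simp add: algebra_simps)
    then show "(s *\<^sub>R x + t *\<^sub>R y, s*a + t*b) \<in> G0" unfolding G0_def by blast
  next
    fix x a b assume "(x,a) \<in> G0" "(x,b) \<in> G0"
    then obtain t1 t2 where h: "x = t1 *\<^sub>R u" "a = t1 * p u" "x = t2 *\<^sub>R u" "b = t2 * p u"
      unfolding G0_def by blast
    then have "t1 = t2" using u0 by (metis scaleR_cancel_right)
    then show "a = b" using h by simp
  next
    fix x a assume "(x,a) \<in> G0"
    then obtain t where h: "x = t *\<^sub>R u" "a = t * p u" unfolding G0_def by blast
    show "a \<le> p x"
    proof (cases "t \<ge> 0")
      case True then show ?thesis using h phom by simp
    next
      case False
      then have "t * p u \<le> 0" using pnn[of u] by (simp add: mult_nonpos_nonneg)
      then show ?thesis using h pnn[of x] by simp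
    qed
  qed
  obtain H where Hadd: "\<And>x y. H (x + y) = H x + H y" and Hsc: "\<And>r x. H (r *\<^sub>R x) = r * H x"
    and Hle: "\<And>x. H x \<le> p x" and HG: "\<And>x a. (x,a)\<in>G0 \<Longrightarrow> H x = a"
    using hahn_banach_graph[OF sp lg] by blast
  have pn: "p x \<le> norm x" for x unfolding p_def using infdist_le[OF z0, of x] by simp
  have Hb: "norm (- H x) \<le> norm x * 1" for x
  proof -
    have "H x \<le> norm x" using Hle pn order_trans by blast
    moreover have "- H x \<le> norm x"
    proof -
      have "H (- x) = - H x" using Hsc[of "-1" x] by simp
      then show ?thesis using Hle[of "-x"] pn[of "-x"] by simp
    qed
    ultimately show ?thesis by simp
  qed
  have bl: "bounded_linear (\<lambda>x. - H x)"
    apply (rule bounded_linear_intro[where K=1])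
    subgoal for x y by (simp add: Hadd)
    subgoal for r x by (simp add: Hsc)
    subgoal for x by (rule Hb)
    done
  define z where "z = Blinfun (\<lambda>x. - H x)"
  have za: "blinfun_apply z x = - H x" for x unfolding z_def using bounded_linear_Blinfun_apply[OF bl] by simp
  have "z \<in> dual_cone C"
    unfolding dual_cone_def
  proof (intro CollectI ballI)
    fix c assume "c \<in> C"
    then have "p c = 0" unfolding p_def by simp
    then show "0 \<le> blinfun_apply z c" using za Hle[of c] by simp
  qed
  moreover have "(1 *\<^sub>R u, 1 * p u) \<in> G0" unfolding G0_def by blast
  then have "H u = p u" using HG by simp
  then have "blinfun_apply z u < 0" using za pu by simp
  ultimately show ?thesis by blast
qed



lemma lsc_seq:
  fixes \<phi> :: "'a::first_countable_topology \<Rightarrow> real"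
  assumes l: "lsc \<phi>" and X: "X \<longlonglongrightarrow> x" and ev: "eventually (\<lambda>n. \<phi> (X n) \<le> c) sequentially"
  shows "\<phi> x \<le> c"
proof (rule ccontr)
  assume "\<not> \<phi> x \<le> c"
  then have cx: "c < \<phi> x" by simp
  then have "eventually (\<lambda>y. c < \<phi> y) (at x)" using l unfolding lsc_def by blast
  then have "eventually (\<lambda>y. y \<noteq> x \<longrightarrow> y \<in> UNIV \<longrightarrow> c < \<phi> y) (nhds x)"
    by (simp add: eventually_at_filter)
  then have "eventually (\<lambda>y. c < \<phi> y) (nhds x)" by eventually_elim (use cx in auto)
  from eventually_compose_filterlim[OF this X] have "eventually (\<lambda>n. c < \<phi> (X n)) sequentially" .
  with ev have "eventually (\<lambda>n. False) sequentially" by eventually_elim auto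
  then show False by simp
qed

lemma lsc_seq_lim:
  fixes \<phi> :: "'a::first_countable_topology \<Rightarrow> real"
  assumes l: "lsc \<phi>" and X: "X \<longlonglongrightarrow> x" and L: "(\<lambda>n. \<phi> (X n)) \<longlonglongrightarrow> L"
  shows "\<phi> x \<le> L"
proof (rule dense_ge)
  fix c assume "L < c"
  from order_tendstoD(2)[OF L this] have "eventually (\<lambda>n. \<phi> (X n) \<le> c) sequentially"
    by eventually_elim simp
  then show "\<phi> x \<le> c" using lsc_seq[OF l X] by blast
qed

lemma sc_convex:
  fixes g :: "'a::real_vector \<Rightarrow> real"
  assumes sc: "strictly_convex g" and t: "0 \<le> t" "t \<le> 1"
  shows "g (t *\<^sub>R x + (1 - t) *\<^sub>R y) \<le> t * g x + (1 - t) * g y"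
proof (cases "x = y \<or> t = 0 \<or> t = 1")
  case True
  then show ?thesis
  proof (elim disjE)
    assume "x = y"
    then have "t *\<^sub>R x + (1 - t) *\<^sub>R y = x" by (simp flip: scaleR_left_distrib)
    then show ?thesis using \<open>x = y\<close> by (simp flip: distrib_right)
  qed auto
next
  case False
  then show ?thesis using sc t unfolding strictly_convex_def by (simp add: less_imp_le)
qed

lemma breg_nonneg:
  fixes g :: "'a::real_normed_vector \<Rightarrow> real"
  assumes gF: "class_F g g'"
  shows "0 \<le> bregman g g' y x"
proof -
  have sc: "strictly_convex g" and gd: "gateaux_deriv g g'" using gF unfolding class_F_def by auto
  define v where "v = y - x"
  have lim: "((\<lambda>t. (g (x + t *\<^sub>R v) - g x) / t) \<longlongrightarrow> blinfun_apply (g' x) v) (at_right 0)"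
    using gd unfolding gateaux_deriv_def filterlim_at_split by blast
  have "eventually (\<lambda>t. t \<in> {0<..<1}) (at_right (0::real))" by (rule eventually_at_right_real) simp
  then have "eventually (\<lambda>t. (g (x + t *\<^sub>R v) - g x) / t \<le> g y - g x) (at_right 0)"
  proof eventually_elim
    case (elim t)
    then have t: "0 < t" "t < 1" by auto
    have "x + t *\<^sub>R v = t *\<^sub>R y + (1 - t) *\<^sub>R x" unfolding v_def by (simp add: algebra_simps)
    then have "g (x + t *\<^sub>R v) \<le> t * g y + (1 - t) * g x" using sc_convex[OF sc, of t y x] t by simp
    then have "g (x + t *\<^sub>R v) - g x \<le> t * (g y - g x)" by (simp add: algebra_simps)
    then show ?case using t by (simp add: pos_divide_le_eq mult.commute)
  qed
  from tendsto_upperbound[OF lim this] have "blinfun_apply (g' x) v \<le> g y - g x" by simp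
  then show ?thesis unfolding bregman_def v_def by simp
qed

lemma breg_self[simp]: "bregman g g' x x = 0"
  unfolding bregman_def by simp

lemma breg_pos:
  fixes g :: "'a::real_normed_vector \<Rightarrow> real"
  assumes gF: "class_F g g'" and ne: "y \<noteq> x"
  shows "0 < bregman g g' y x"
proof -
  have sc: "strictly_convex g" using gF unfolding class_F_def by auto
  define w where "w = (1/2) *\<^sub>R y + (1 - 1/2) *\<^sub>R x"
  have gw: "g w < (1/2) * g y + (1 - 1/2) * g x"
    using sc ne unfolding strictly_convex_def w_def by (metis field_sum_of_halves half_gt_zero less_add_same_cancel1 zero_less_one)
  have "0 \<le> bregman g g' w x" by (rule breg_nonneg[OF gF])
  then have "blinfun_apply (g' x) (w - x) \<le> g w - g x" unfolding bregman_def by simp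
  moreover have hh: "(1/2) *\<^sub>R x + (1/2) *\<^sub>R x = x" by (simp flip: scaleR_left_distrib)
  have "w - x = (1/2) *\<^sub>R (y - x)" unfolding w_def using hh by (simp add: algebra_simps)
  then have "blinfun_apply (g' x) (w - x) = (1/2) * blinfun_apply (g' x) (y - x)"
    by (simp add: blinfun.scaleR_right)
  ultimately show ?thesis using gw unfolding bregman_def by simp
qed

lemma breg_zero_iff:
  fixes g :: "'a::real_normed_vector \<Rightarrow> real"
  assumes gF: "class_F g g'" and "bregman g g' y x \<le> 0"
  shows "y = x"
  using breg_pos[OF gF] assms(2) by force

lemma three_point:
  "bregman g g' a c = bregman g g' a b + bregman g g' b c
     + (blinfun_apply (g' b) (a - b) - blinfun_apply (g' c) (a - b))"
  unfolding bregman_def by (simp add: blinfun.diff_right algebra_simps)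

lemma breg_convex1:
  fixes g :: "'a::real_normed_vector \<Rightarrow> real"
  assumes gF: "class_F g g'" and t: "0 \<le> t" "t \<le> 1"
  shows "bregman g g' (t *\<^sub>R a + (1 - t) *\<^sub>R b) x \<le> t * bregman g g' a x + (1 - t) * bregman g g' b x"
proof -
  have sc: "strictly_convex g" using gF unfolding class_F_def by auto
  have "t *\<^sub>R a + (1 - t) *\<^sub>R b - x = t *\<^sub>R (a - x) + (1 - t) *\<^sub>R (b - x)" by (simp add: algebra_simps)
  then have e: "blinfun_apply (g' x) (t *\<^sub>R a + (1 - t) *\<^sub>R b - x)
     = t * blinfun_apply (g' x) (a - x) + (1 - t) * blinfun_apply (g' x) (b - x)"
    by (simp add: blinfun.add_right blinfun.scaleR_right)
  show ?thesis using sc_convex[OF sc t, of a b] unfolding bregman_def e by (simp add: algebra_simps)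
qed

lemma breg_sconvex1:
  fixes g :: "'a::real_normed_vector \<Rightarrow> real"
  assumes gF: "class_F g g'" and t: "0 < t" "t < 1" and ab: "a \<noteq> b"
  shows "bregman g g' (t *\<^sub>R a + (1 - t) *\<^sub>R b) x < t * bregman g g' a x + (1 - t) * bregman g g' b x"
proof -
  have sc: "strictly_convex g" using gF unfolding class_F_def by auto
  have "t *\<^sub>R a + (1 - t) *\<^sub>R b - x = t *\<^sub>R (a - x) + (1 - t) *\<^sub>R (b - x)" by (simp add: algebra_simps)
  then have e: "blinfun_apply (g' x) (t *\<^sub>R a + (1 - t) *\<^sub>R b - x)
     = t * blinfun_apply (g' x) (a - x) + (1 - t) * blinfun_apply (g' x) (b - x)"
    by (simp add: blinfun.add_right blinfun.scaleR_right)
  have "g (t *\<^sub>R a + (1 - t) *\<^sub>R b) < t * g a + (1 - t) * g b"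
    using sc t ab unfolding strictly_convex_def by blast
  then show ?thesis unfolding bregman_def e by (simp add: algebra_simps)
qed

lemma modulus_le:
  fixes g :: "'a::real_normed_vector \<Rightarrow> real"
  assumes gF: "class_F g g'" and "norm (y - x) = t"
  shows "modulus_tc g g' x t \<le> bregman g g' y x"
  unfolding modulus_tc_def
proof (rule cInf_lower)
  show "bregman g g' y x \<in> {bregman g g' y x |y. norm (y - x) = t}" using assms(2) by blast
  show "bdd_below {bregman g g' y x |y. norm (y - x) = t}"
    unfolding bdd_below_def using breg_nonneg[OF gF] by blast
qed

lemma modulus_nonneg:
  fixes g :: "'a::real_normed_vector \<Rightarrow> real"
  assumes gF: "class_F g g'" and "norm (y - x) = t"
  shows "0 \<le> modulus_tc g g' x t"
  unfolding modulus_tc_def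
  by (rule cInf_greatest) (use assms breg_nonneg[OF gF] in auto)

lemma sphere_point:
  fixes d :: "'a::real_normed_vector"
  assumes "d \<noteq> 0" "0 \<le> t"
  shows "norm ((w + (t / norm d) *\<^sub>R d) - w) = t"
  using assms by simp

lemma modulus_scale:
  fixes g :: "'a::real_normed_vector \<Rightarrow> real"
  assumes gF: "class_F g g'" and r: "0 < r" "r \<le> norm (y - x)"
  shows "modulus_tc g g' x r * norm (y - x) \<le> r * bregman g g' y x"
proof -
  define s where "s = norm (y - x)"
  have s: "0 < s" "r \<le> s" using r s_def by auto
  define y' where "y' = (r/s) *\<^sub>R y + (1 - r/s) *\<^sub>R x"
  have "y' - x = (r/s) *\<^sub>R (y - x)" unfolding y'_def by (simp add: algebra_simps)
  then have "norm (y' - x) = r" using s r unfolding s_def by simp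
  then have "modulus_tc g g' x r \<le> bregman g g' y' x" by (rule modulus_le[OF gF])
  also have "\<dots> \<le> (r/s) * bregman g g' y x + (1 - r/s) * bregman g g' x x"
    unfolding y'_def by (rule breg_convex1[OF gF]) (use s r in auto)
  also have "\<dots> = (r/s) * bregman g g' y x" by simp
  finally have "modulus_tc g g' x r \<le> (r * bregman g g' y x) / s" by simp
  then show ?thesis using s unfolding s_def by (simp add: le_divide_eq)
qed



lemma half_sum: "(1/2) *\<^sub>R x + (1/2) *\<^sub>R x = (x::'a::real_vector)"
  by (simp flip: scaleR_left_distrib)
lemma mid_diff1: "a - (1/2) *\<^sub>R (a + b) = (1/2) *\<^sub>R (a - (b::'a::real_vector))"
proof -
  have "a - (1/2) *\<^sub>R (a + b) = ((1/2) *\<^sub>R a + (1/2) *\<^sub>R a) - (1/2) *\<^sub>R (a + b)" by (simp only: half_sum)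
  also have "\<dots> = (1/2) *\<^sub>R (a - b)" by (simp add: algebra_simps)
  finally show ?thesis .
qed
lemma mid_diff2: "b - (1/2) *\<^sub>R (a + b) = - (a - (1/2) *\<^sub>R (a + (b::'a::real_vector)))"
  using mid_diff1[of b a] mid_diff1[of a b] by (simp add: add.commute algebra_simps)
lemma mid_diff3: "(1/2) *\<^sub>R (a + b) - x0 = (1/2) *\<^sub>R (a - x0) + (1/2) *\<^sub>R (b - (x0::'a::real_vector))"
proof -
  have "(1/2) *\<^sub>R (a + b) - x0 = (1/2) *\<^sub>R (a + b) - ((1/2) *\<^sub>R x0 + (1/2) *\<^sub>R x0)" by (simp only: half_sum)
  also have "\<dots> = (1/2) *\<^sub>R (a - x0) + (1/2) *\<^sub>R (b - x0)" by (simp add: algebra_simps)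
  finally show ?thesis .
qed

lemma proj_exists:
  fixes g :: "'a::banach \<Rightarrow> real"
  assumes gF: "class_F g g'" and gtc: "totally_convex g g'" and H2: "H2 g g'"
    and Q: "closed Q" "convex Q" "Q \<noteq> {}"
  shows "\<exists>y\<in>Q. \<forall>z\<in>Q. bregman g g' y x0 \<le> bregman g g' z x0"
proof -
  define h where "h y = bregman g g' y x0" for y
  have hnn: "0 \<le> h y" for y unfolding h_def by (rule breg_nonneg[OF gF])
  define m where "m = Inf (h ` Q)"
  have bddQ: "bdd_below (h ` Q)" unfolding bdd_below_def using hnn by blast
  have mle: "m \<le> h z" if "z \<in> Q" for z unfolding m_def using that bddQ by (simp add: cInf_lower)
  have "\<forall>n. \<exists>y. y \<in> Q \<and> h y < m + inverse (real (Suc n))"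
  proof
    fix n
    have "Inf (h ` Q) < m + inverse (real (Suc n))" unfolding m_def by simp
    from cInf_lessD[OF _ this] Q(3) show "\<exists>y. y \<in> Q \<and> h y < m + inverse (real (Suc n))" by blast
  qed
  then obtain Y where YQ: "\<And>n. Y n \<in> Q" and Yh: "\<And>n. h (Y n) < m + inverse (real (Suc n))"
    by metis
  define v0 where "v0 = modulus_tc g g' x0 1"
  have v0: "0 < v0" using gtc unfolding totally_convex_def v0_def by simp
  define R where "R = max 1 ((m + 1) / v0)"
  have Ybd: "norm (Y n - x0) \<le> R" for n
  proof (cases "norm (Y n - x0) \<le> 1")
    case True then show ?thesis unfolding R_def by simp
  next
    case False
    have "v0 * norm (Y n - x0) \<le> 1 * h (Y n)"
      unfolding v0_def h_def by (rule modulus_scale[OF gF]) (use False in auto)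
    also have "\<dots> \<le> m + 1"
    proof -
      have "inverse (real (Suc n)) \<le> 1" by (simp add: field_simps)
      then show ?thesis using Yh[of n] by simp
    qed
    finally have "norm (Y n - x0) \<le> (m + 1) / v0" using v0 by (simp add: le_divide_eq mult.commute)
    then show ?thesis unfolding R_def by simp
  qed
  have cross: "h (Y i) + h (Y j) = bregman g g' (Y i) w + bregman g g' (Y j) w + 2 * h w"
    if "w = (1/2) *\<^sub>R (Y i + Y j)" for i j w
  proof -
    have e: "Y j - w = - (Y i - w)" using that mid_diff2 by simp
    show ?thesis unfolding h_def three_point[of g g' "Y i" x0 w] three_point[of g g' "Y j" x0 w] e
      by (simp add: blinfun.minus_right blinfun.diff_right algebra_simps)
  qed
  have "Cauchy Y"
  proof (rule metric_CauchyI)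
    fix e :: real assume e: "0 < e"
    define A where "A = {(1/2) *\<^sub>R (Y i + Y j) | i j. True}"
    have AQ: "A \<subseteq> Q"
    proof
      fix w assume "w \<in> A"
      then obtain i j where w: "w = (1/2) *\<^sub>R (Y i + Y j)" unfolding A_def by blast
      have "(1/2) *\<^sub>R Y i + (1 - 1/2) *\<^sub>R Y j \<in> Q" by (rule convexD[OF Q(2) YQ YQ]) auto
      then show "w \<in> Q" using w by (simp add: scaleR_right_distrib)
    qed
    have Abd: "bounded A"
    proof -
      have "A \<subseteq> cball x0 R"
      proof
        fix w assume "w \<in> A"
        then obtain i j where w: "w = (1/2) *\<^sub>R (Y i + Y j)" unfolding A_def by blast
        have "w - x0 = (1/2) *\<^sub>R (Y i - x0) + (1/2) *\<^sub>R (Y j - x0)" unfolding w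
          by (rule mid_diff3)
        then have "norm (w - x0) \<le> norm ((1/2) *\<^sub>R (Y i - x0)) + norm ((1/2) *\<^sub>R (Y j - x0))"
          using norm_triangle_ineq by metis
        then have "norm (w - x0) \<le> (1/2) * norm (Y i - x0) + (1/2) * norm (Y j - x0)" by simp
        also have "\<dots> \<le> R" using Ybd[of i] Ybd[of j] by simp
        finally show "w \<in> cball x0 R" by (simp add: dist_norm norm_minus_commute)
      qed
      then show ?thesis using bounded_cball bounded_subset by blast
    qed
    have Ane: "A \<noteq> {}" unfolding A_def by blast
    define \<delta> where "\<delta> = Inf ((\<lambda>x. modulus_tc g g' x (e/2)) ` A)"
    have \<delta>: "0 < \<delta>" using H2 e Abd Ane unfolding H2_def \<delta>_def by simp
    obtain M :: nat where M: "2 / \<delta> < real M" using reals_Archimedean2 by blast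
    have "dist (Y i) (Y j) < e" if ij: "i \<ge> M" "j \<ge> M" for i j
    proof (rule ccontr)
      assume "\<not> dist (Y i) (Y j) < e"
      then have dij: "e \<le> norm (Y i - Y j)" by (simp add: dist_norm)
      define w where "w = (1/2) *\<^sub>R (Y i + Y j)"
      have wA: "w \<in> A" unfolding A_def w_def by blast
      have "Y i - w = (1/2) *\<^sub>R (Y i - Y j)" unfolding w_def by (rule mid_diff1)
      then have nw: "norm (Y i - w) = norm (Y i - Y j) / 2" by simp
      have d0: "Y i - w \<noteq> 0" using nw dij e by auto
      have modnn: "0 \<le> modulus_tc g g' x (e/2)" for x
        by (rule modulus_nonneg[OF gF sphere_point[OF d0, of "e/2" x]]) (use e in simp)
      have "\<delta> \<le> modulus_tc g g' w (e/2)"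
        unfolding \<delta>_def by (rule cInf_lower) (use wA modnn in \<open>auto simp: bdd_below_def\<close>)
      also have "\<dots> \<le> bregman g g' (Y i) w"
      proof -
        have "modulus_tc g g' w (e/2) * norm (Y i - w) \<le> (e/2) * bregman g g' (Y i) w"
          by (rule modulus_scale[OF gF]) (use e nw dij in auto)
        moreover have "modulus_tc g g' w (e/2) * (e/2) \<le> modulus_tc g g' w (e/2) * norm (Y i - w)"
          using nw dij modnn[of w] by (intro mult_left_mono) auto
        ultimately have "modulus_tc g g' w (e/2) * (e/2) \<le> (e/2) * bregman g g' (Y i) w" by linarith
        then show ?thesis using e by (simp add: mult.commute)
      qed
      finally have d1: "\<delta> \<le> bregman g g' (Y i) w" .
      have "h (Y i) + h (Y j) = bregman g g' (Y i) w + bregman g g' (Y j) w + 2 * h w"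
        using cross w_def by blast
      moreover have "0 \<le> bregman g g' (Y j) w" by (rule breg_nonneg[OF gF])
      moreover have "m \<le> h w" using mle AQ wA by blast
      ultimately have lo: "2 * m + \<delta> \<le> h (Y i) + h (Y j)" using d1 by linarith
      have inv: "inverse (real (Suc k)) < \<delta> / 2" if "k \<ge> M" for k
      proof -
        have "2 / \<delta> < real (Suc k)" using M that by simp
        then have "2 < \<delta> * real (Suc k)" using \<delta> by (simp add: divide_less_eq mult.commute)
        then show ?thesis using \<delta> by (simp add: inverse_eq_divide divide_less_eq mult.commute)
      qed
      have "h (Y i) + h (Y j) < 2 * m + \<delta>" using Yh[of i] Yh[of j] inv[OF ij(1)] inv[OF ij(2)] by linarith
      with lo show False by linarith
    qed
    then show "\<exists>M. \<forall>i\<ge>M. \<forall>j\<ge>M. dist (Y i) (Y j) < e" by blast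
  qed
  then obtain ys where Yl: "Y \<longlonglongrightarrow> ys" using Cauchy_convergent_iff convergent_def by blast
  have ysQ: "ys \<in> Q" using closed_sequentially[OF Q(1) YQ Yl] .
  have hlim: "(\<lambda>n. h (Y n)) \<longlonglongrightarrow> m"
  proof (rule real_tendsto_sandwich)
    show "eventually (\<lambda>n. m \<le> h (Y n)) sequentially" using mle YQ by simp
    show "eventually (\<lambda>n. h (Y n) \<le> m + inverse (real (Suc n))) sequentially"
      by (rule always_eventually) (use Yh less_imp_le in blast)
    show "(\<lambda>n. m) \<longlonglongrightarrow> m" by simp
    show "(\<lambda>n. m + inverse (real (Suc n))) \<longlonglongrightarrow> m" using tendsto_add[OF tendsto_const LIMSEQ_inverse_real_of_nat, of m] by simp
  qed
  have gl: "(\<lambda>n. g (Y n)) \<longlonglongrightarrow> m + g x0 + blinfun_apply (g' x0) (ys - x0)"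
  proof -
    have "(\<lambda>n. blinfun_apply (g' x0) (Y n - x0)) \<longlonglongrightarrow> blinfun_apply (g' x0) (ys - x0)"
      by (intro tendsto_intros Yl)
    from tendsto_add[OF tendsto_add[OF hlim tendsto_const[of "g x0"]] this]
    show ?thesis unfolding h_def bregman_def by simp
  qed
  have "g ys \<le> m + g x0 + blinfun_apply (g' x0) (ys - x0)"
    using lsc_seq_lim[OF _ Yl gl] gF unfolding class_F_def by blast
  then have "h ys \<le> m" unfolding h_def bregman_def by simp
  then show ?thesis using ysQ mle unfolding h_def by (meson order_trans)
qed



lemma proj_unique:
  fixes g :: "'a::real_normed_vector \<Rightarrow> real"
  assumes gF: "class_F g g'" and Q: "convex Q"
    and y1: "y1 \<in> Q" "\<forall>z\<in>Q. bregman g g' y1 x0 \<le> bregman g g' z x0"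
    and y2: "y2 \<in> Q" "\<forall>z\<in>Q. bregman g g' y2 x0 \<le> bregman g g' z x0"
  shows "y1 = y2"
proof (rule ccontr)
  assume ne: "y1 \<noteq> y2"
  define w where "w = (1/2) *\<^sub>R y1 + (1 - 1/2) *\<^sub>R y2"
  have wQ: "w \<in> Q" unfolding w_def by (rule convexD[OF Q y1(1) y2(1)]) auto
  have "bregman g g' w x0 < (1/2) * bregman g g' y1 x0 + (1 - 1/2) * bregman g g' y2 x0"
    unfolding w_def by (rule breg_sconvex1[OF gF _ _ ne]) auto
  moreover have "bregman g g' y1 x0 = bregman g g' y2 x0" using y1 y2 by (intro order_antisym) auto
  then have "(1/2) * bregman g g' y1 x0 + (1 - 1/2) * bregman g g' y2 x0 = bregman g g' y1 x0" by simp
  moreover have "bregman g g' y1 x0 \<le> bregman g g' w x0" using y1(2) wQ by blast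
  ultimately show False by linarith
qed

lemma bproj_prop:
  fixes g :: "'a::banach \<Rightarrow> real"
  assumes gF: "class_F g g'" and gtc: "totally_convex g g'" and H2: "H2 g g'"
    and Q: "closed Q" "convex Q" "Q \<noteq> {}"
  shows "bproj g g' Q x0 \<in> Q"
proof -
  have ex: "\<exists>y. y \<in> Q \<and> (\<forall>z\<in>Q. bregman g g' y x0 \<le> bregman g g' z x0)"
    using proj_exists[OF gF gtc H2 Q] by blast
  have "\<exists>!y. y \<in> Q \<and> (\<forall>z\<in>Q. bregman g g' y x0 \<le> bregman g g' z x0)"
    using ex proj_unique[OF gF Q(2)] by blast
  from theI'[OF this] show ?thesis unfolding bproj_def by blast
qed

lemma bproj_self:
  fixes g :: "'a::real_normed_vector \<Rightarrow> real"
  assumes gF: "class_F g g'" and x: "x0 \<in> Q"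
  shows "bproj g g' Q x0 = x0"
  unfolding bproj_def
proof (rule the_equality)
  show "x0 \<in> Q \<and> (\<forall>z\<in>Q. bregman g g' x0 x0 \<le> bregman g g' z x0)"
    using x breg_nonneg[OF gF] by simp
next
  fix y assume "y \<in> Q \<and> (\<forall>z\<in>Q. bregman g g' y x0 \<le> bregman g g' z x0)"
  then have "bregman g g' y x0 \<le> 0" using x by force
  then show "y = x0" by (rule breg_zero_iff[OF gF])
qed

lemma neg_img: "w \<in> uminus ` C \<longleftrightarrow> - w \<in> (C :: 'b::real_vector set)"
proof
  assume "w \<in> uminus ` C" then obtain c where "c \<in> C" "w = - c" by blast
  then show "- w \<in> C" by simp
next
  assume "- w \<in> C" then have "- (- w) \<in> uminus ` C" by (rule imageI)
  then show "w \<in> uminus ` C" by simp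
qed

theorem proposition2p17:
  fixes g :: "'a::banach \<Rightarrow> real" and g' :: "'a \<Rightarrow> ('a \<Rightarrow>\<^sub>L real)"
    and K :: "'a set" and C :: "'b::banach set"
    and f :: "'a \<Rightarrow> 'a \<Rightarrow> 'b" and T :: "'a \<Rightarrow> 'a set"
  assumes K: "K \<noteq> {}" "closed K" "convex K"
    and gF: "class_F g g'" and gtc: "totally_convex g g'" and "H1 g g'" and "H2 g g'"
    and C: "closed C" "convex C" "cone C" "pointed C" "interior C \<noteq> {}"
    and T: "\<forall>x\<in>K. T x \<subseteq> K \<and> T x \<noteq> {} \<and> closed (T x) \<and> convex (T x)"
    and Tq: "quasi_Dg_nonexpansive g g' K T"
    and fconv: "\<forall>x. C_convex C (f x)"
    and flsc: "\<forall>x. positively_lsc C (f x)"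
  shows "closed (DS C K f T) \<and> convex (DS C K f T)"
proof -
  note H2 = \<open>H2 g g'\<close>
  define S where "S x = bproj g g' (T x) x" for x
  define FixS where "FixS = {x \<in> K. x = S x}"
  have hq: "\<And>p x. p \<in> FixS \<Longrightarrow> x \<in> K \<Longrightarrow> bregman g g' p (S x) \<le> bregman g g' p x"
    using Tq unfolding quasi_Dg_nonexpansive_def Let_def S_def FixS_def by blast
  have F1: "x \<in> FixS" if "x \<in> K" "x \<in> T x" for x
    using that bproj_self[OF gF, of x "T x"] unfolding FixS_def S_def by simp
  have F2: "x \<in> T x" if "x \<in> K" "S x = x" for x
    using bproj_prop[OF gF gtc H2, of "T x" x] T that unfolding S_def by auto
  have Cne: "C \<noteq> {}" using C(5) interior_subset by blast
  have fix_closed: "x \<in> T x" if Xl: "X \<longlonglongrightarrow> x" and XK: "\<And>n. X n \<in> K" and XT: "\<And>n. X n \<in> T (X n)" and xK: "x \<in> K"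
    for X x
  proof -
    define r where "r n = - (blinfun_apply (g' x) (X n - x) - blinfun_apply (g' (S x)) (X n - x))" for n
    have le: "bregman g g' x (S x) \<le> r n" for n
    proof -
      have "bregman g g' (X n) (S x) \<le> bregman g g' (X n) x" using hq[OF F1[OF XK XT] xK] .
      then show ?thesis unfolding r_def using three_point[of g g' "X n" "S x" x] by linarith
    qed
    have "r \<longlonglongrightarrow> - (blinfun_apply (g' x) (x - x) - blinfun_apply (g' (S x)) (x - x))"
      unfolding r_def by (intro tendsto_intros Xl)
    then have "r \<longlonglongrightarrow> 0" by simp
    moreover have "\<exists>N. \<forall>n\<ge>N. bregman g g' x (S x) \<le> r n" using le by blast
    ultimately have "bregman g g' x (S x) \<le> 0" by (rule LIMSEQ_le_const)
    then have "x = S x" by (rule breg_zero_iff[OF gF])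
    then show ?thesis using F2[OF xK] by simp
  qed
  have fix_convex: "z \<in> T z" if x1: "x1 \<in> K" "x1 \<in> T x1" and x2: "x2 \<in> K" "x2 \<in> T x2"
    and uv: "0 \<le> u" "0 \<le> v" "u + v = 1" and z: "z = u *\<^sub>R x1 + v *\<^sub>R x2" for x1 x2 u v z
  proof -
    have zK: "z \<in> K" using convexD[OF K(3) x1(1) x2(1) uv] z by simp
    define \<psi> where "\<psi> y = blinfun_apply (g' z) y - blinfun_apply (g' (S z)) y" for y
    have lin: "\<psi> (a + b) = \<psi> a + \<psi> b" "\<psi> (c *\<^sub>R a) = c * \<psi> a" for a b c
      unfolding \<psi>_def by (simp_all add: blinfun.add_right blinfun.scaleR_right algebra_simps)
    have i1: "bregman g g' z (S z) + \<psi> (x1 - z) \<le> 0"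
      using hq[OF F1[OF x1] zK] three_point[of g g' x1 "S z" z] unfolding \<psi>_def by linarith
    have i2: "bregman g g' z (S z) + \<psi> (x2 - z) \<le> 0"
      using hq[OF F1[OF x2] zK] three_point[of g g' x2 "S z" z] unfolding \<psi>_def by linarith
    have "u *\<^sub>R (x1 - z) + v *\<^sub>R (x2 - z) = z - (u + v) *\<^sub>R z"
      using z by (simp add: algebra_simps)
    then have zero: "u *\<^sub>R (x1 - z) + v *\<^sub>R (x2 - z) = 0" using uv by simp
    have "\<psi> (u *\<^sub>R (x1 - z) + v *\<^sub>R (x2 - z)) = u * \<psi> (x1 - z) + v * \<psi> (x2 - z)"
      by (simp only: lin)
    then have "u * \<psi> (x1 - z) + v * \<psi> (x2 - z) = \<psi> 0" using zero by simp
    then have s0: "u * \<psi> (x1 - z) + v * \<psi> (x2 - z) = 0" unfolding \<psi>_def by simp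
    have "u * (bregman g g' z (S z) + \<psi> (x1 - z)) + v * (bregman g g' z (S z) + \<psi> (x2 - z)) \<le> 0"
      using mult_left_mono[OF i1 uv(1)] mult_left_mono[OF i2 uv(2)] by simp
    then have "(u + v) * bregman g g' z (S z) \<le> 0" using s0 by (simp add: algebra_simps)
    then have "bregman g g' z (S z) \<le> 0" using uv by simp
    then have "z = S z" by (rule breg_zero_iff[OF gF])
    then show ?thesis using F2[OF zK] by simp
  qed
  have f_closed: "- f y x \<in> C" if Xl: "X \<longlonglongrightarrow> x" and XC: "\<And>n. - f y (X n) \<in> C" for X x y
  proof (rule ccontr)
    assume "- f y x \<notin> C"
    from dual_cone_sep[OF C(1,2,3) Cne this] obtain z where z: "z \<in> dual_cone C"
      and zl: "blinfun_apply z (- f y x) < 0" by blast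
    have ls: "lsc (\<lambda>x. blinfun_apply z (f y x))" using flsc z unfolding positively_lsc_def by blast
    have "eventually (\<lambda>n. blinfun_apply z (f y (X n)) \<le> 0) sequentially"
    proof (rule always_eventually, rule allI)
      fix n
      have "0 \<le> blinfun_apply z (- f y (X n))" using z XC unfolding dual_cone_def by blast
      then show "blinfun_apply z (f y (X n)) \<le> 0" by (simp add: blinfun.minus_right)
    qed
    from lsc_seq[OF ls Xl this] have "blinfun_apply z (f y x) \<le> 0" .
    with zl show False by (simp add: blinfun.minus_right)
  qed
  have f_convex: "- f y (u *\<^sub>R x1 + v *\<^sub>R x2) \<in> C"
    if "- f y x1 \<in> C" "- f y x2 \<in> C" "0 \<le> u" "0 \<le> v" "u + v = 1" for y x1 x2 u v
  proof -
    have v: "v = 1 - u" using that by simp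
    have a: "(u *\<^sub>R f y x1 + (1 - u) *\<^sub>R f y x2) - f y (u *\<^sub>R x1 + (1 - u) *\<^sub>R x2) \<in> C"
      using fconv that unfolding C_convex_def v by simp
    have b: "u *\<^sub>R (- f y x1) \<in> C" by (rule cone_scale_mem[OF C(3) that(1,3)])
    have c: "(1 - u) *\<^sub>R (- f y x2) \<in> C" by (rule cone_scale_mem[OF C(3) that(2)]) (use that in simp)
    have "((u *\<^sub>R f y x1 + (1 - u) *\<^sub>R f y x2) - f y (u *\<^sub>R x1 + (1 - u) *\<^sub>R x2))
          + (u *\<^sub>R (- f y x1) + (1 - u) *\<^sub>R (- f y x2)) \<in> C"
      by (intro cone_add_mem[OF C(2,3)] a b c)
    then show ?thesis unfolding v by (simp add: algebra_simps)
  qed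
  have "closed (DS C K f T)"
    unfolding closed_sequential_limits
  proof (intro allI impI, elim conjE)
    fix X x assume XD: "\<forall>n. X n \<in> DS C K f T" and Xl: "X \<longlonglongrightarrow> x"
    have XK: "X n \<in> K" "X n \<in> T (X n)" "\<And>y. y \<in> K \<Longrightarrow> - f y (X n) \<in> C" for n
      using XD unfolding DS_def neg_img by auto
    have xK: "x \<in> K" using closed_sequentially[OF K(2) XK(1) Xl] .
    show "x \<in> DS C K f T"
      unfolding DS_def neg_img using xK fix_closed[OF Xl XK(1,2) xK] f_closed[OF Xl XK(3)] by blast
  qed
  moreover have "convex (DS C K f T)"
  proof (rule convexI)
    fix x1 x2 and u v :: real assume x1: "x1 \<in> DS C K f T" and x2: "x2 \<in> DS C K f T"
      and uv: "0 \<le> u" "0 \<le> v" "u + v = 1"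
    have h1: "x1 \<in> K" "x1 \<in> T x1" "\<And>y. y \<in> K \<Longrightarrow> - f y x1 \<in> C" using x1 unfolding DS_def neg_img by auto
    have h2: "x2 \<in> K" "x2 \<in> T x2" "\<And>y. y \<in> K \<Longrightarrow> - f y x2 \<in> C" using x2 unfolding DS_def neg_img by auto
    show "u *\<^sub>R x1 + v *\<^sub>R x2 \<in> DS C K f T"
      unfolding DS_def neg_img
      using convexD[OF K(3) h1(1) h2(1) uv] fix_convex[OF h1(1,2) h2(1,2) uv refl]
        f_convex[OF h1(3) h2(3) uv] by blast
  qed
  ultimately show ?thesis by blast
qed

end
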